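(* In the setting described in the context, assume $\mathcal{A}$ satisfies the Deep-$\mathfrak{M}$-Null Space Property with constants $\gamma\ge1$, $\rho>0$, and let $\sigma_{\mathfrak{M}}>0$ be a Deep-lower-RIP constant of $\mathcal{A}$ with regard to $\mathfrak{M}$. Let $\overline{\mathcal{S}}\in\mathfrak{M}$, $\overline{\mathbf{h}}\in\mathbb{R}^{S\times K}_{\overline{\mathcal{S}}}$, $\delta\ge0$, and $X=M_1(\overline{\mathbf{h}}_1)\cdots M_K(\overline{\mathbf{h}}_K)+e$ with $\|e\|\le\delta$. Let $\mathcal{S}^*\in\mathfrak{M}$ and $\mathbf{h}^*\in\mathbb{R}^{S\times K}_{\mathcal{S}^*}$, and set $\eta=\|M_1(\mathbf{h}^*_1)\cdots M_K(\mathbf{h}^*_K)-X\|$. If $\eta+\delta\le\rho$, then $$\|P(\mathbf{h}^* )-P(\overline{\mathbf{h}})\|\le\frac{\gamma}{\sigma_{\mathfrak{M}}}(\delta+\eta).$$ Moreover, if $\frac{\gamma}{\sigma_{\mathfrak{M}}}(\delta+\eta)\le\frac12\max\left(\|P(\mathbf{h}^* )\|_\infty,\|P(\overline{\mathbf{h}})\|_\infty\right)$, then for every $p\in[1,\infty]$, $$d_p([\mathbf{h}^*],[\overline{\mathbf{h}}])\le 7(KS)^{\frac1p}\min\left(\|P(\overline{\mathbf{h}})\|_\infty^{\frac1K-1},\|P(\mathbf{h}^* )\|_\infty^{\frac1K-1}\right)\frac{\gamma}{\sigma_{\mathfrak{M}}}(\delta+\eta).$$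
   Context: Let $K,S\ge 1$ and $m_1,\dots,m_{K+1}$ be positive integers, $\mathbb{N}_S=\{1,\dots,S\}$, and for $k=1,\dots,K$ let $M_k:\mathbb{R}^S\to\mathbb{R}^{m_k\times m_{k+1}}$ be linear. Parameters are $\mathbf{h}=(\mathbf{h}_1,\dots,\mathbf{h}_K)\in\mathbb{R}^{S\times K}$, $\mathbf{h}_k\in\mathbb{R}^S$ with entries $\mathbf{h}_{k,i}$. $\mathbb{R}^{S^K}$ is the space of real order-$K$ tensors with all axes of size $S$, indexed by $\mathbf{i}\in\mathbb{N}_S^K$; $\|\cdot\|$ is the Euclidean norm and $\|\cdot\|_p$ the entrywise $\ell^p$ norm (for vectors, tensors and parameters alike). Segre embedding: $P(\mathbf{h})_{\mathbf{i}}=\mathbf{h}_{1,\mathbf{i}_1}\cdots\mathbf{h}_{K,\mathbf{i}_K}$. The lifting operator $\mathcal{A}:\mathbb{R}^{S^K}\to\mathbb{R}^{m_1\times m_{K+1}}$ is the unique linear map with $\mathcal{A}P(\mathbf{h})=M_1(\mathbf{h}_1)\cdots M_K(\mathbf{h}_K)$ for all $\mathbf{h}$; matrices carry the Frobenius norm. A support is $\mathcal{S}=(\mathcal{S}_1,\dots,\mathcal{S}_K)$, $\mathcal{S}_k\subset\mathbb{N}_S$; unions are componentwise; $\mathbf{i}\in\mathcal{S}$ means $\mathbf{i}_k\in\mathcal{S}_k$ for all $k$. $\mathbb{R}^{S\times K}_{\mathcal{S}}=\{\mathbf{h}:\mathbf{h}_{k,i}=0\text{ whenever }i\notin\mathcal{S}_k\}$,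 $\mathbb{T}_{\mathcal{S}}=\{T: T_{\mathbf{i}}=0\text{ whenever }\mathbf{i}\notin\mathcal{S}\}$, $P_{\mathcal{S}}$ the orthogonal projection onto $\mathbb{T}_{\mathcal{S}}$, and $\mathcal{A}_{\mathcal{S}}=\mathcal{A}P_{\mathcal{S}}$. $\mathfrak{M}$ is a given finite family of supports. Deep-$\mathfrak{M}$-Null Space Property with constants $(\gamma,\rho)$, $\gamma\ge1,\rho>0$: for all $\mathcal{S},\mathcal{S}'\in\mathfrak{M}$, every $T\in P(\mathbb{R}^{S\times K}_{\mathcal{S}})+P(\mathbb{R}^{S\times K}_{\mathcal{S}'})$ with $\|\mathcal{A}_{\mathcal{S}\cup\mathcal{S}'}T\|\le\rho$ and every $T'\in\ker\mathcal{A}_{\mathcal{S}\cup\mathcal{S}'}$ satisfy $\|T\|\le\gamma\|T-P_{\mathcal{S}\cup\mathcal{S}'}T'\|$. Deep-lower-RIP constant: a number $\sigma_{\mathfrak{M}}>0$ such that for all $\mathcal{S},\mathcal{S}'\in\mathfrak{M}$ and all $T$ in the orthogonal complement of $\ker\mathcal{A}_{\mathcal{S}\cup\mathcal{S}'}$, $\sigma_{\mathfrak{M}}\|P_{\mathcal{S}\cup\mathcal{S}'}T\|\le\|\mathcal{A}_{\mathcal{S}\cup\mathcal{S}'}T\|$. Metric $d_p$: let $\mathbb{R}^{S\times K}_*=\{\mathbf{h}:\mathbf{h}_k\ne0\ \forall k\}$; $\mathbf{h}\sim\mathbf{g}$ iff there are $\lambda_1,\dots,\lambda_K\in\mathbb{R}$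 with $\prod_k\lambda_k=1$ and $\mathbf{h}_k=\lambda_k\mathbf{g}_k$ for all $k$; $[\mathbf{h}]$ is the class of $\mathbf{h}$. With $\mathbb{R}^{S\times K}_{diag}=\{\mathbf{h}\in\mathbb{R}^{S\times K}_*:\|\mathbf{h}_k\|_\infty=\|\mathbf{h}_1\|_\infty\ \forall k\}$, define for $\mathbf{h},\mathbf{g}\in\mathbb{R}^{S\times K}_*$: $d_p([\mathbf{h}],[\mathbf{g}])=\inf\{\|\mathbf{h}'-\mathbf{g}'\|_p:\mathbf{h}'\in[\mathbf{h}]\cap\mathbb{R}^{S\times K}_{diag},\ \mathbf{g}'\in[\mathbf{g}]\cap\mathbb{R}^{S\times K}_{diag}\}$. *)

theory Defs
  imports Complex_Main "HOL-Library.Extended_Real" "Jordan_Normal_Form.Matrix"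
begin

(* Conventions: axes/layers k range over {1..K}, coordinates i over {1..S}.
   A parameter h :: nat => nat => real is (h k i) = h_{k,i}; values outside the
   index range are required to be 0 (extensional representation).
   A tensor T :: (nat => nat) => real is indexed by i in PiE {1..K} (%_. {1..S})
   and is required to vanish outside that index set.
   A support is a function nat => nat set (component k = S_k). *)

definition idx :: "nat \<Rightarrow> nat \<Rightarrow> (nat \<Rightarrow> nat) set" where
  "idx K S = PiE {1..K} (\<lambda>_. {1..S})"

definition tensors :: "nat \<Rightarrow> nat \<Rightarrow> ((nat \<Rightarrow> nat) \<Rightarrow> real) set" where
  "tensors K S = {T. \<forall>i. i \<notin> idx K S \<longrightarrow> T i = 0}"

definition params :: "nat \<Rightarrow> nat \<Rightarrow> (nat \<Rightarrow> nat \<Rightarrow> real) set" where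
  "params K S = {h. \<forall>k i. (k \<notin> {1..K} \<or> i \<notin> {1..S}) \<longrightarrow> h k i = 0}"

definition params_supp :: "nat \<Rightarrow> nat \<Rightarrow> (nat \<Rightarrow> nat set) \<Rightarrow> (nat \<Rightarrow> nat \<Rightarrow> real) set" where
  "params_supp K S Sp = {h \<in> params K S. \<forall>k\<in>{1..K}. \<forall>i\<in>{1..S}. i \<notin> Sp k \<longrightarrow> h k i = 0}"

definition params_nz :: "nat \<Rightarrow> nat \<Rightarrow> (nat \<Rightarrow> nat \<Rightarrow> real) set" where
  "params_nz K S = {h \<in> params K S. \<forall>k\<in>{1..K}. \<exists>i\<in>{1..S}. h k i \<noteq> 0}"

definition segre :: "nat \<Rightarrow> nat \<Rightarrow> (nat \<Rightarrow> nat \<Rightarrow> real) \<Rightarrow> (nat \<Rightarrow> nat) \<Rightarrow> real" where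
  "segre K S h = (\<lambda>i. if i \<in> idx K S then (\<Prod>k=1..K. h k (i k)) else 0)"

definition tnorm :: "nat \<Rightarrow> nat \<Rightarrow> ((nat \<Rightarrow> nat) \<Rightarrow> real) \<Rightarrow> real" where
  "tnorm K S T = sqrt (\<Sum>i\<in>idx K S. (T i)\<^sup>2)"

definition tinner :: "nat \<Rightarrow> nat \<Rightarrow> ((nat \<Rightarrow> nat) \<Rightarrow> real) \<Rightarrow> ((nat \<Rightarrow> nat) \<Rightarrow> real) \<Rightarrow> real" where
  "tinner K S T T' = (\<Sum>i\<in>idx K S. T i * T' i)"

definition tinfnorm :: "nat \<Rightarrow> nat \<Rightarrow> ((nat \<Rightarrow> nat) \<Rightarrow> real) \<Rightarrow> real" where
  "tinfnorm K S T = Max ((\<lambda>i. \<bar>T i\<bar>) ` idx K S)"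

definition supp_un :: "(nat \<Rightarrow> nat set) \<Rightarrow> (nat \<Rightarrow> nat set) \<Rightarrow> nat \<Rightarrow> nat set" where
  "supp_un Sp Sp' = (\<lambda>k. Sp k \<union> Sp' k)"

definition tproj :: "nat \<Rightarrow> nat \<Rightarrow> (nat \<Rightarrow> nat set) \<Rightarrow> ((nat \<Rightarrow> nat) \<Rightarrow> real) \<Rightarrow> (nat \<Rightarrow> nat) \<Rightarrow> real" where
  "tproj K S Sp T = (\<lambda>i. if i \<in> idx K S \<and> (\<forall>k\<in>{1..K}. i k \<in> Sp k) then T i else 0)"

definition fnorm :: "real mat \<Rightarrow> real" where
  "fnorm A = sqrt (\<Sum>r<dim_row A. \<Sum>c<dim_col A. (A $$ (r, c))\<^sup>2)"

definition mat_chain :: "nat \<Rightarrow> (nat \<Rightarrow> real mat) \<Rightarrow> real mat" where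
  "mat_chain K F = foldl (\<lambda>acc k. acc * F k) (F 1) [2..<K+1]"

definition layer_prod :: "nat \<Rightarrow> (nat \<Rightarrow> (nat \<Rightarrow> real) \<Rightarrow> real mat) \<Rightarrow> (nat \<Rightarrow> nat \<Rightarrow> real) \<Rightarrow> real mat" where
  "layer_prod K M h = mat_chain K (\<lambda>k. M k (h k))"

definition unitv :: "nat \<Rightarrow> nat \<Rightarrow> real" where
  "unitv j = (\<lambda>l. if l = j then 1 else 0)"

(* Lifting operator: the linear map with A(P(h)) = M_1(h_1)...M_K(h_K),
   written out explicitly via the standard tensor basis:
   A T = sum_i T_i * M_1(e_{i_1}) ... M_K(e_{i_K}). *)
definition lift :: "nat \<Rightarrow> nat \<Rightarrow> (nat \<Rightarrow> nat) \<Rightarrow> (nat \<Rightarrow> (nat \<Rightarrow> real) \<Rightarrow> real mat)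
    \<Rightarrow> ((nat \<Rightarrow> nat) \<Rightarrow> real) \<Rightarrow> real mat" where
  "lift K S m M T = mat (m 1) (m (K+1))
     (\<lambda>(r, c). \<Sum>i\<in>idx K S. T i * (layer_prod K M (\<lambda>k. unitv (i k))) $$ (r, c))"

definition lift_supp :: "nat \<Rightarrow> nat \<Rightarrow> (nat \<Rightarrow> nat) \<Rightarrow> (nat \<Rightarrow> (nat \<Rightarrow> real) \<Rightarrow> real mat)
    \<Rightarrow> (nat \<Rightarrow> nat set) \<Rightarrow> ((nat \<Rightarrow> nat) \<Rightarrow> real) \<Rightarrow> real mat" where
  "lift_supp K S m M Sp T = lift K S m M (tproj K S Sp T)"

definition deep_nsp :: "nat \<Rightarrow> nat \<Rightarrow> (nat \<Rightarrow> nat) \<Rightarrow> (nat \<Rightarrow> (nat \<Rightarrow> real) \<Rightarrow> real mat)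
    \<Rightarrow> (nat \<Rightarrow> nat set) set \<Rightarrow> real \<Rightarrow> real \<Rightarrow> bool" where
  "deep_nsp K S m M Ms \<gamma> \<rho> \<longleftrightarrow> \<gamma> \<ge> 1 \<and> \<rho> > 0 \<and>
     (\<forall>Sp\<in>Ms. \<forall>Sp'\<in>Ms. \<forall>T.
        (\<exists>h g. h \<in> params_supp K S Sp \<and> g \<in> params_supp K S Sp' \<and>
               T = (\<lambda>i. segre K S h i + segre K S g i)) \<longrightarrow>
        fnorm (lift_supp K S m M (supp_un Sp Sp') T) \<le> \<rho> \<longrightarrow>
        (\<forall>T'\<in>tensors K S. lift_supp K S m M (supp_un Sp Sp') T' = 0\<^sub>m (m 1) (m (K+1)) \<longrightarrow>
           tnorm K S T \<le> \<gamma> * tnorm K S (\<lambda>i. T i - tproj K S (supp_un Sp Sp') T' i)))"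

definition deep_lower_rip :: "nat \<Rightarrow> nat \<Rightarrow> (nat \<Rightarrow> nat) \<Rightarrow> (nat \<Rightarrow> (nat \<Rightarrow> real) \<Rightarrow> real mat)
    \<Rightarrow> (nat \<Rightarrow> nat set) set \<Rightarrow> real \<Rightarrow> bool" where
  "deep_lower_rip K S m M Ms \<sigma> \<longleftrightarrow> \<sigma> > 0 \<and>
     (\<forall>Sp\<in>Ms. \<forall>Sp'\<in>Ms. \<forall>T\<in>tensors K S.
        (\<forall>T'\<in>tensors K S. lift_supp K S m M (supp_un Sp Sp') T' = 0\<^sub>m (m 1) (m (K+1))
            \<longrightarrow> tinner K S T T' = 0) \<longrightarrow>
        \<sigma> * tnorm K S (tproj K S (supp_un Sp Sp') T) \<le> fnorm (lift_supp K S m M (supp_un Sp Sp') T))"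

definition layer_inf :: "nat \<Rightarrow> (nat \<Rightarrow> nat \<Rightarrow> real) \<Rightarrow> nat \<Rightarrow> real" where
  "layer_inf S h k = Max ((\<lambda>i. \<bar>h k i\<bar>) ` {1..S})"

definition pclass :: "nat \<Rightarrow> nat \<Rightarrow> (nat \<Rightarrow> nat \<Rightarrow> real) \<Rightarrow> (nat \<Rightarrow> nat \<Rightarrow> real) set" where
  "pclass K S h = {g \<in> params_nz K S. \<exists>lam::nat \<Rightarrow> real. (\<Prod>k=1..K. lam k) = 1 \<and>
       (\<forall>k\<in>{1..K}. \<forall>i\<in>{1..S}. g k i = lam k * h k i)}"

definition params_diag :: "nat \<Rightarrow> nat \<Rightarrow> (nat \<Rightarrow> nat \<Rightarrow> real) set" where
  "params_diag K S = {h \<in> params_nz K S. \<forall>k\<in>{1..K}. layer_inf S h k = layer_inf S h 1}"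

definition pnorm :: "nat \<Rightarrow> nat \<Rightarrow> ereal \<Rightarrow> (nat \<Rightarrow> nat \<Rightarrow> real) \<Rightarrow> real" where
  "pnorm K S p h = (if p = \<infinity> then Max ((\<lambda>(k, i). \<bar>h k i\<bar>) ` ({1..K} \<times> {1..S}))
     else (\<Sum>k=1..K. \<Sum>i=1..S. \<bar>h k i\<bar> powr real_of_ereal p) powr (1 / real_of_ereal p))"

definition inv_p :: "ereal \<Rightarrow> real" where
  "inv_p p = (if p = \<infinity> then 0 else 1 / real_of_ereal p)"

definition dist_p :: "nat \<Rightarrow> nat \<Rightarrow> ereal \<Rightarrow> (nat \<Rightarrow> nat \<Rightarrow> real) \<Rightarrow> (nat \<Rightarrow> nat \<Rightarrow> real) \<Rightarrow> real" where
  "dist_p K S p h g = Inf {pnorm K S p (\<lambda>k i. h' k i - g' k i) | h' g'.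
       h' \<in> pclass K S h \<inter> params_diag K S \<and> g' \<in> pclass K S g \<inter> params_diag K S}"

end

theory Submission
  imports Defs "HOL-Analysis.L2_Norm"
begin


lemma mat_chain_1: "mat_chain 1 F = F 1"
  by (simp add: mat_chain_def)

lemma mat_chain_1' [simp]: "mat_chain (Suc 0) F = F (Suc 0)"
  by (simp add: mat_chain_def)

lemma mat_chain_Suc: "K \<ge> 1 \<Longrightarrow> mat_chain (Suc K) F = mat_chain K F * F (Suc K)"
  unfolding mat_chain_def
  by (simp add: upt_Suc_append)

lemma mat_chain_cong: "K \<ge> 1 \<Longrightarrow> (\<And>k. k \<in> {1..K} \<Longrightarrow> F k = G k) \<Longrightarrow> mat_chain K F = mat_chain K G"
proof (induction K)
  case 0 then show ?case by simp
next
  case (Suc K)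
  show ?case
  proof (cases "K = 0")
    case True then show ?thesis using Suc.prems by (simp add: mat_chain_def)
  next
    case False
    then have "K \<ge> 1" by simp
    then show ?thesis using Suc by (simp add: mat_chain_Suc)
  qed
qed

lemma mult_entry:
  assumes "A \<in> carrier_mat n p" "B \<in> carrier_mat p q" "r < n" "c < q"
  shows "(A * B) $$ (r, c) = (\<Sum>l<p. A $$ (r, l) * B $$ (l, c))"
  using assms by (auto simp: scalar_prod_def lessThan_atLeast0 intro!: sum.cong)

lemma layer_expand_gen:
  assumes k: "k \<in> {1..K}"
    and M_dim: "\<forall>k\<in>{1..K}. \<forall>v. M k v \<in> carrier_mat (m k) (m (Suc k))"
    and M_add: "\<forall>k\<in>{1..K}. \<forall>v w. M k (\<lambda>i. v i + w i) = M k v + M k w"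
    and M_smult: "\<forall>k\<in>{1..K}. \<forall>a v. M k (\<lambda>i. a * v i) = a \<cdot>\<^sub>m M k v"
    and l: "l < m k" and c: "c < m (Suc k)"
    and J: "finite J"
  shows "M k (\<lambda>i. \<Sum>j\<in>J. a j * unitv j i) $$ (l,c) = (\<Sum>j\<in>J. a j * M k (unitv j) $$ (l,c))"
  using J
proof (induction J rule: finite_induct)
  case empty
  have "M k (\<lambda>i. 0 * unitv 0 i) = 0 \<cdot>\<^sub>m M k (unitv 0)" using M_smult k by blast
  moreover have "M k (unitv 0) \<in> carrier_mat (m k) (m (Suc k))" using M_dim k by blast
  ultimately show ?case using l c by simp
next
  case (insert x F)
  have d1: "M k (\<lambda>i. a x * unitv x i) \<in> carrier_mat (m k) (m (Suc k))"
   and d2: "M k (\<lambda>i. \<Sum>j\<in>F. a j * unitv j i) \<in> carrier_mat (m k) (m (Suc k))"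
   and d3: "M k (unitv x) \<in> carrier_mat (m k) (m (Suc k))" using M_dim k by blast+
  have "M k (\<lambda>i. \<Sum>j\<in>insert x F. a j * unitv j i)
      = M k (\<lambda>i. a x * unitv x i + (\<Sum>j\<in>F. a j * unitv j i))"
    using insert.hyps by simp
  also have "\<dots> = M k (\<lambda>i. a x * unitv x i) + M k (\<lambda>i. \<Sum>j\<in>F. a j * unitv j i)"
    using M_add[rule_format, OF k, of "\<lambda>i. a x * unitv x i" "\<lambda>i. \<Sum>j\<in>F. a j * unitv j i"] by simp
  also have "M k (\<lambda>i. a x * unitv x i) = a x \<cdot>\<^sub>m M k (unitv x)"
    using M_smult k by blast
  finally show ?case using insert d1 d2 d3 l c by simp
qed

lemma layer_expand:
  assumes k: "k \<in> {1..K}"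
    and M_dim: "\<forall>k\<in>{1..K}. \<forall>v. M k v \<in> carrier_mat (m k) (m (Suc k))"
    and M_fun: "\<forall>k\<in>{1..K}. \<forall>v w. (\<forall>i\<in>{1..S}. v i = w i) \<longrightarrow> M k v = M k w"
    and M_add: "\<forall>k\<in>{1..K}. \<forall>v w. M k (\<lambda>i. v i + w i) = M k v + M k w"
    and M_smult: "\<forall>k\<in>{1..K}. \<forall>a v. M k (\<lambda>i. a * v i) = a \<cdot>\<^sub>m M k v"
    and l: "l < m k" and c: "c < m (Suc k)"
  shows "M k v $$ (l,c) = (\<Sum>j\<in>{1..S}. v j * M k (unitv j) $$ (l,c))"
proof -
  have "\<forall>i\<in>{1..S}. v i = (\<Sum>j\<in>{1..S}. v j * unitv j i)"
    by (auto simp: unitv_def if_distrib cong: if_cong)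
  then have "M k v = M k (\<lambda>i. \<Sum>j\<in>{1..S}. v j * unitv j i)"
    using M_fun[rule_format, OF k, of v "\<lambda>i. \<Sum>j\<in>{1..S}. v j * unitv j i"] by blast
  then show ?thesis using layer_expand_gen[OF k M_dim M_add M_smult l c] by simp
qed

lemma sum_PiE_insert:
  assumes "a \<notin> A"
  shows "(\<Sum>i\<in>PiE (insert a A) B. f i) = (\<Sum>y\<in>B a. \<Sum>g\<in>PiE A B. f (g(a:=y)))"
  using assms by (simp add: PiE_insert_eq sum.reindex inj_combinator sum.cartesian_product)
     (intro sum.cong, auto)

definition ipI :: "'a set \<Rightarrow> ('a \<Rightarrow> real) \<Rightarrow> ('a \<Rightarrow> real) \<Rightarrow> real" where
  "ipI I f g = (\<Sum>i\<in>I. f i * g i)"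

definition lc :: "nat \<Rightarrow> (nat \<Rightarrow> real) \<Rightarrow> ('a \<Rightarrow> real) list \<Rightarrow> 'a \<Rightarrow> real" where
  "lc n d xs = (\<lambda>i. \<Sum>q<n. d q * (xs!q) i)"

lemma ip_lc_zero:
  assumes "\<forall>j<n. ipI I z (xs!j) = 0"
  shows "ipI I z (lc n d xs) = 0"
proof -
  have "ipI I z (lc n d xs) = (\<Sum>q<n. d q * ipI I z (xs!q))"
    unfolding ipI_def lc_def
    by (simp add: sum_distrib_left sum_distrib_right algebra_simps) (rule sum.swap)
  also have "\<dots> = 0" using assms by simp
  finally show ?thesis .
qed

lemma ip_diff_left: "ipI I (\<lambda>i. f i - g i) h = ipI I f h - ipI I g h"
  unfolding ipI_def by (simp add: algebra_simps sum_subtractf)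

lemma ip_add_right: "ipI I f (\<lambda>i. g i + h i) = ipI I f g + ipI I f h"
  unfolding ipI_def by (simp add: algebra_simps sum.distrib)

lemma ip_scale_left: "ipI I (\<lambda>i. a * f i) h = a * ipI I f h"
  unfolding ipI_def by (simp add: algebra_simps sum_distrib_left)

lemma proj_exists:
  assumes fin: "finite I"
  shows "\<exists>d. \<forall>j<length L. ipI I (\<lambda>i. x i - lc (length L) d L i) (L!j) = 0"
proof (induction L arbitrary: x rule: rev_induct)
  case Nil then show ?case by simp
next
  case (snoc b xs)
  let ?n = "length xs"
  obtain cb where cb: "\<forall>j<?n. ipI I (\<lambda>i. b i - lc ?n cb xs i) (xs!j) = 0" using snoc.IH by blast
  obtain cx where cx: "\<forall>j<?n. ipI I (\<lambda>i. x i - lc ?n cx xs i) (xs!j) = 0" using snoc.IH by blast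
  define r where "r = (\<lambda>i. b i - lc ?n cb xs i)"
  define z where "z = (\<lambda>i. x i - lc ?n cx xs i)"
  have lc_snoc: "lc (Suc ?n) d (xs @ [b]) i = lc ?n d xs i + d ?n * b i" for d i
    unfolding lc_def by (simp add: nth_append)
  have lc_cong: "lc ?n d xs = lc ?n d' xs" if "\<forall>q<?n. d q = d' q" for d d'
    unfolding lc_def using that by auto
  have bdec: "b = (\<lambda>i. lc ?n cb xs i + r i)" unfolding r_def by simp
  have rorth: "\<forall>j<?n. ipI I r (xs!j) = 0" using cb r_def by simp
  show ?case
  proof (cases "ipI I r r = 0")
    case True
    have r0: "\<forall>i\<in>I. r i = 0"
    proof -
      have "(\<Sum>i\<in>I. (r i)\<^sup>2) = 0" using True by (simp add: ipI_def power2_eq_square)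
      then show ?thesis using fin by (simp add: sum_nonneg_eq_0_iff)
    qed
    define d where "d = (\<lambda>q. if q < ?n then cx q else 0)"
    have lcd: "lc (Suc ?n) d (xs @ [b]) = lc ?n cx xs"
      using lc_cong[of d cx] by (auto simp: lc_snoc d_def)
    have zorth: "\<forall>j<?n. ipI I z (xs!j) = 0" using cx z_def by simp
    have zb: "ipI I z b = 0"
    proof -
      have "ipI I z r = 0" using r0 by (simp add: ipI_def)
      then show ?thesis using ip_lc_zero[OF zorth] by (subst bdec) (simp add: ip_add_right)
    qed
    show ?thesis
      apply (rule exI[of _ d])
      using zorth zb lcd unfolding z_def
      by (auto simp: nth_append less_Suc_eq)
  next
    case False
    define \<alpha> where "\<alpha> = ipI I z r / ipI I r r"
    define d where "d = (\<lambda>q. if q < ?n then cx q - \<alpha> * cb q else \<alpha>)"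
    have lcd: "lc (Suc ?n) d (xs @ [b]) i = lc ?n cx xs i + \<alpha> * r i" for i
    proof -
      have "lc ?n d xs i = lc ?n cx xs i - \<alpha> * lc ?n cb xs i"
        unfolding lc_def d_def by (simp add: sum_subtractf sum_distrib_left algebra_simps)
      then show ?thesis by (simp add: lc_snoc d_def r_def algebra_simps)
    qed
    define z' where "z' = (\<lambda>i. z i - \<alpha> * r i)"
    have z'eq: "(\<lambda>i. x i - lc (Suc ?n) d (xs @ [b]) i) = z'"
      unfolding z'_def z_def lcd by (simp add: algebra_simps)
    have zorth: "\<forall>j<?n. ipI I z (xs!j) = 0" using cx z_def by simp
    have z'orth: "\<forall>j<?n. ipI I z' (xs!j) = 0"
      using zorth rorth unfolding z'_def by (simp add: ip_diff_left ip_scale_left)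
    have z'r: "ipI I z' r = 0"
    proof -
      have "ipI I z' r = ipI I z r - \<alpha> * ipI I r r"
        unfolding z'_def ip_diff_left[of I z "\<lambda>i. \<alpha> * r i"] ip_scale_left by simp
      then show ?thesis using False by (simp add: \<alpha>_def)
    qed
    have z'b: "ipI I z' b = 0"
      using ip_lc_zero[OF z'orth] z'r by (subst bdec) (simp add: ip_add_right)
    show ?thesis
      apply (rule exI[of _ d])
      using z'orth z'b z'eq
      by (auto simp: nth_append less_Suc_eq)
  qed
qed

locale linlayers =
  fixes K S :: nat and m :: "nat \<Rightarrow> nat" and M :: "nat \<Rightarrow> (nat \<Rightarrow> real) \<Rightarrow> real mat"
  assumes K: "K \<ge> 1"
    and M_dim: "\<forall>k\<in>{1..K}. \<forall>v. M k v \<in> carrier_mat (m k) (m (Suc k))"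
    and M_fun: "\<forall>k\<in>{1..K}. \<forall>v w. (\<forall>i\<in>{1..S}. v i = w i) \<longrightarrow> M k v = M k w"
    and M_add: "\<forall>k\<in>{1..K}. \<forall>v w. M k (\<lambda>i. v i + w i) = M k v + M k w"
    and M_smult: "\<forall>k\<in>{1..K}. \<forall>a v. M k (\<lambda>i. a * v i) = a \<cdot>\<^sub>m M k v"
begin

lemma lexp: "k \<in> {1..K} \<Longrightarrow> l < m k \<Longrightarrow> c < m (Suc k) \<Longrightarrow>
   M k v $$ (l,c) = (\<Sum>j\<in>{1..S}. v j * M k (unitv j) $$ (l,c))"
  using layer_expand[OF _ M_dim M_fun M_add M_smult] by blast

lemma chain_dim: "1 \<le> n \<Longrightarrow> n \<le> K \<Longrightarrow> mat_chain n (\<lambda>k. M k (v k)) \<in> carrier_mat (m 1) (m (Suc n))"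
proof (induction n)
  case 0 then show ?case by simp
next
  case (Suc n)
  show ?case
  proof (cases "n = 0")
    case True then show ?thesis using M_dim Suc.prems by (simp add: mat_chain_1)
  next
    case False
    then have "mat_chain n (\<lambda>k. M k (v k)) \<in> carrier_mat (m 1) (m (Suc n))" using Suc by simp
    moreover have "M (Suc n) (v (Suc n)) \<in> carrier_mat (m (Suc n)) (m (Suc (Suc n)))"
      using M_dim Suc.prems by simp
    ultimately show ?thesis using False by (simp add: mat_chain_Suc)
  qed
qed

lemma multilin:
  "1 \<le> n \<Longrightarrow> n \<le> K \<Longrightarrow> r < m 1 \<Longrightarrow> c < m (Suc n) \<Longrightarrow>
   (\<Sum>i\<in>PiE {1..n} (\<lambda>_. {1..S}). (\<Prod>k=1..n. h k (i k)) * mat_chain n (\<lambda>k. M k (unitv (i k))) $$ (r,c))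
   = mat_chain n (\<lambda>k. M k (h k)) $$ (r,c)"
proof (induction n arbitrary: c)
  case 0 then show ?case by simp
next
  case (Suc n)
  have ins: "{1..Suc n} = insert (Suc n) {1..n}" by auto
  have nin: "Suc n \<notin> {1..n}" by simp
  show ?case
  proof (cases "n = 0")
    case True
    have "(\<Sum>i\<in>PiE {1..Suc n} (\<lambda>_. {1..S}). (\<Prod>k=1..Suc n. h k (i k)) * mat_chain (Suc n) (\<lambda>k. M k (unitv (i k))) $$ (r,c))
       = (\<Sum>y\<in>{1..S}. h 1 y * M 1 (unitv y) $$ (r,c))"
      using True by (simp add: sum_PiE_insert mat_chain_1)
    also have "\<dots> = M 1 (h 1) $$ (r,c)"
      using lexp[of 1 r c "h 1"] Suc.prems True K by simp
    finally show ?thesis using True by (simp add: mat_chain_1)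
  next
    case False
    then have n1: "n \<ge> 1" by simp
    let ?X = "\<lambda>g. mat_chain n (\<lambda>k. M k (unitv (g k)))"
    let ?Y = "\<lambda>y. M (Suc n) (unitv y)"
    let ?a = "\<lambda>g. (\<Prod>k=1..n. h k (g k))"
    let ?p = "m (Suc n)"
    have Xd: "?X g \<in> carrier_mat (m 1) ?p" for g using chain_dim[OF n1] Suc.prems by simp
    have Yd: "?Y y \<in> carrier_mat ?p (m (Suc (Suc n)))" for y using M_dim Suc.prems by simp
    have Ad: "mat_chain n (\<lambda>k. M k (h k)) \<in> carrier_mat (m 1) ?p" using chain_dim[OF n1] Suc.prems by simp
    have Bd: "M (Suc n) (h (Suc n)) \<in> carrier_mat ?p (m (Suc (Suc n)))" using M_dim Suc.prems by simp
    have tm: "(\<Prod>k=1..Suc n. h k ((g(Suc n := y)) k)) * mat_chain (Suc n) (\<lambda>k. M k (unitv ((g(Suc n := y)) k))) $$ (r,c)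
        = (\<Sum>l<?p. (?a g * h (Suc n) y) * (?X g $$ (r,l) * ?Y y $$ (l,c)))" for g y
    proof -
      have "(\<Prod>k=1..Suc n. h k ((g(Suc n := y)) k)) = ?a g * h (Suc n) y"
        by (simp add: ins nin)
      moreover have "mat_chain (Suc n) (\<lambda>k. M k (unitv ((g(Suc n := y)) k))) = ?X g * ?Y y"
      proof -
        have "mat_chain n (\<lambda>k. M k (unitv ((g(Suc n := y)) k))) = ?X g"
          by (rule mat_chain_cong[OF n1]) auto
        then show ?thesis using n1 by (simp add: mat_chain_Suc)
      qed
      moreover have "(?X g * ?Y y) $$ (r,c) = (\<Sum>l<?p. ?X g $$ (r,l) * ?Y y $$ (l,c))"
        using mult_entry[OF Xd Yd] Suc.prems by simp
      ultimately show ?thesis by (simp add: sum_distrib_left)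
    qed
    have "(\<Sum>i\<in>PiE {1..Suc n} (\<lambda>_. {1..S}). (\<Prod>k=1..Suc n. h k (i k)) * mat_chain (Suc n) (\<lambda>k. M k (unitv (i k))) $$ (r,c))
       = (\<Sum>y\<in>{1..S}. \<Sum>g\<in>PiE {1..n} (\<lambda>_. {1..S}). \<Sum>l<?p. (?a g * h (Suc n) y) * (?X g $$ (r,l) * ?Y y $$ (l,c)))"
    proof -
      have ins': "PiE {1..Suc n} (\<lambda>_. {1..S}) = PiE (insert (Suc n) {1..n}) (\<lambda>_. {1..S})"
        using ins by simp
      show ?thesis unfolding ins' sum_PiE_insert[OF nin] tm by simp
    qed
    also have "\<dots> = (\<Sum>l<?p. (\<Sum>g\<in>PiE {1..n} (\<lambda>_. {1..S}). ?a g * ?X g $$ (r,l)) * (\<Sum>y\<in>{1..S}. h (Suc n) y * ?Y y $$ (l,c)))"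
    proof -
      let ?F = "\<lambda>y g l. (?a g * ?X g $$ (r,l)) * (h (Suc n) y * ?Y y $$ (l,c))"
      let ?G = "PiE {1..n} (\<lambda>_. {1..S})"
      have "(\<Sum>y\<in>{1..S}. \<Sum>g\<in>?G. \<Sum>l<?p. (?a g * h (Suc n) y) * (?X g $$ (r,l) * ?Y y $$ (l,c)))
          = (\<Sum>y\<in>{1..S}. \<Sum>g\<in>?G. \<Sum>l<?p. ?F y g l)"
        by (simp add: algebra_simps)
      also have "\<dots> = (\<Sum>y\<in>{1..S}. \<Sum>l<?p. \<Sum>g\<in>?G. ?F y g l)"
        by (rule sum.cong[OF refl], rule sum.swap)
      also have "\<dots> = (\<Sum>l<?p. \<Sum>y\<in>{1..S}. \<Sum>g\<in>?G. ?F y g l)"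
        by (rule sum.swap)
      also have "\<dots> = (\<Sum>l<?p. \<Sum>g\<in>?G. \<Sum>y\<in>{1..S}. ?F y g l)"
        by (rule sum.cong[OF refl], rule sum.swap)
      also have "\<dots> = (\<Sum>l<?p. (\<Sum>g\<in>?G. ?a g * ?X g $$ (r,l)) * (\<Sum>y\<in>{1..S}. h (Suc n) y * ?Y y $$ (l,c)))"
        by (simp add: sum_product)
      finally show ?thesis .
    qed
    also have "\<dots> = (\<Sum>l<?p. mat_chain n (\<lambda>k. M k (h k)) $$ (r,l) * M (Suc n) (h (Suc n)) $$ (l,c))"
    proof (rule sum.cong[OF refl])
      fix l assume l: "l \<in> {..<?p}"
      show "(\<Sum>g\<in>PiE {1..n} (\<lambda>_. {1..S}). ?a g * ?X g $$ (r,l)) * (\<Sum>y\<in>{1..S}. h (Suc n) y * ?Y y $$ (l,c))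
          = mat_chain n (\<lambda>k. M k (h k)) $$ (r,l) * M (Suc n) (h (Suc n)) $$ (l,c)"
        using Suc.IH[OF n1 _ _ ] Suc.prems l lexp[of "Suc n" l c "h (Suc n)"] by simp
    qed
    also have "\<dots> = mat_chain (Suc n) (\<lambda>k. M k (h k)) $$ (r,c)"
      using mult_entry[OF Ad Bd] Suc.prems n1 by (simp add: mat_chain_Suc)
    finally show ?thesis .
  qed
qed


lemma lp_dim: "layer_prod K M h \<in> carrier_mat (m 1) (m (Suc K))"
  unfolding layer_prod_def using chain_dim[of K] K by simp

lemma lift_entry: "r < m 1 \<Longrightarrow> c < m (Suc K) \<Longrightarrow>
   lift K S m M T $$ (r,c) = (\<Sum>i\<in>idx K S. T i * layer_prod K M (\<lambda>k. unitv (i k)) $$ (r,c))"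
  by (simp add: lift_def)

lemma lift_segre: "r < m 1 \<Longrightarrow> c < m (Suc K) \<Longrightarrow>
   lift K S m M (segre K S h) $$ (r,c) = layer_prod K M h $$ (r,c)"
proof -
  assume rc: "r < m 1" "c < m (Suc K)"
  have "lift K S m M (segre K S h) $$ (r,c)
     = (\<Sum>i\<in>PiE {1..K} (\<lambda>_. {1..S}). (\<Prod>k=1..K. h k (i k)) * mat_chain K (\<lambda>k. M k (unitv (i k))) $$ (r,c))"
    using rc by (simp add: lift_entry segre_def idx_def layer_prod_def)
  also have "\<dots> = layer_prod K M h $$ (r,c)"
    unfolding layer_prod_def using multilin[of K r c h] K rc by simp
  finally show ?thesis .
qed

end

lemma fnorm_L2: "fnorm A = L2_set (\<lambda>(r,c). A $$ (r,c)) ({..<dim_row A} \<times> {..<dim_col A})"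
  unfolding fnorm_def L2_set_def by (simp add: sum.cartesian_product case_prod_beta)

lemma fnorm_triangle:
  assumes "A \<in> carrier_mat a b" "B \<in> carrier_mat a b" "C \<in> carrier_mat a b"
    and "\<And>r c. r < a \<Longrightarrow> c < b \<Longrightarrow> A $$ (r,c) = B $$ (r,c) + C $$ (r,c)"
  shows "fnorm A \<le> fnorm B + fnorm C"
proof -
  have "fnorm A = L2_set (\<lambda>x. (\<lambda>(r,c). B $$ (r,c)) x + (\<lambda>(r,c). C $$ (r,c)) x) ({..<a} \<times> {..<b})"
    unfolding fnorm_L2 using assms by (intro L2_set_cong) auto
  also have "\<dots> \<le> fnorm B + fnorm C"
    unfolding fnorm_L2 using assms L2_set_triangle_ineq by auto
  finally show ?thesis .
qed

lemma tnorm_L2: "tnorm K S T = L2_set T (idx K S)"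
  unfolding tnorm_def L2_set_def by simp

lemma finite_idx: "finite (idx K S)"
  unfolding idx_def by (simp add: finite_PiE)

lemma abs_le_tnorm: "i \<in> idx K S \<Longrightarrow> \<bar>T i\<bar> \<le> tnorm K S T"
proof -
  assume i: "i \<in> idx K S"
  have "\<bar>T i\<bar> \<le> L2_set (\<lambda>i. \<bar>T i\<bar>) (idx K S)" by (rule member_le_L2_set[OF finite_idx i])
  also have "\<dots> = tnorm K S T" unfolding tnorm_L2 L2_set_def by simp
  finally show ?thesis .
qed


lemma part1:
  fixes K S :: nat and m :: "nat \<Rightarrow> nat"
    and M :: "nat \<Rightarrow> (nat \<Rightarrow> real) \<Rightarrow> real mat"
    and Ms :: "(nat \<Rightarrow> nat set) set"
    and \<gamma> \<rho> \<sigma> \<delta> :: real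
    and Sbar Sstar :: "nat \<Rightarrow> nat set"
    and hbar hstar :: "nat \<Rightarrow> nat \<Rightarrow> real"
    and e X :: "real mat"
  assumes K: "K \<ge> 1"
    and M_dim: "\<forall>k\<in>{1..K}. \<forall>v. M k v \<in> carrier_mat (m k) (m (Suc k))"
    and M_fun: "\<forall>k\<in>{1..K}. \<forall>v w. (\<forall>i\<in>{1..S}. v i = w i) \<longrightarrow> M k v = M k w"
    and M_add: "\<forall>k\<in>{1..K}. \<forall>v w. M k (\<lambda>i. v i + w i) = M k v + M k w"
    and M_smult: "\<forall>k\<in>{1..K}. \<forall>a v. M k (\<lambda>i. a * v i) = a \<cdot>\<^sub>m M k v"
    and nsp: "deep_nsp K S m M Ms \<gamma> \<rho>"
    and rip: "deep_lower_rip K S m M Ms \<sigma>"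
    and Sbar: "Sbar \<in> Ms" and hbar: "hbar \<in> params_supp K S Sbar"
    and e: "e \<in> carrier_mat (m 1) (m (K+1))" and e_le: "fnorm e \<le> \<delta>"
    and X: "X = layer_prod K M hbar + e"
    and Sstar: "Sstar \<in> Ms" and hstar: "hstar \<in> params_supp K S Sstar"
    and eta_le: "fnorm (layer_prod K M hstar - X) + \<delta> \<le> \<rho>"
  shows "tnorm K S (\<lambda>i. segre K S hstar i - segre K S hbar i)
           \<le> \<gamma> / \<sigma> * (\<delta> + fnorm (layer_prod K M hstar - X))"
proof -
  interpret linlayers K S m M using K M_dim M_fun M_add M_smult by unfold_locales
  define U where "U = supp_un Sstar Sbar"
  define T where "T = (\<lambda>i. segre K S hstar i - segre K S hbar i)"
  define g where "g = (\<lambda>k i. if k = 1 then - hbar k i else hbar k i)"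
  define LPs where "LPs = layer_prod K M hstar"
  define LPb where "LPb = layer_prod K M hbar"
  define E where "E = (\<lambda>i. layer_prod K M (\<lambda>k. unitv (i k)))"
  have gam: "\<gamma> \<ge> 1" and sig: "\<sigma> > 0" using nsp rip by (auto simp: deep_nsp_def deep_lower_rip_def)
  have g_supp: "g \<in> params_supp K S Sbar"
    using hbar by (auto simp: g_def params_supp_def params_def)
  have segre_g: "segre K S g i = - segre K S hbar i" for i
  proof (cases "i \<in> idx K S")
    case True
    have "(\<Prod>k=1..K. g k (i k)) = g 1 (i 1) * (\<Prod>k=Suc 1..K. g k (i k))"
      using K by (simp add: prod.atLeast_Suc_atMost)
    also have "(\<Prod>k=Suc 1..K. g k (i k)) = (\<Prod>k=Suc 1..K. hbar k (i k))"
      by (rule prod.cong) (auto simp: g_def)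
    also have "g 1 (i 1) * (\<Prod>k=Suc 1..K. hbar k (i k)) = - (hbar 1 (i 1) * (\<Prod>k=Suc 1..K. hbar k (i k)))"
      by (simp add: g_def)
    also have "hbar 1 (i 1) * (\<Prod>k=Suc 1..K. hbar k (i k)) = (\<Prod>k=1..K. hbar k (i k))"
      using K by (simp add: prod.atLeast_Suc_atMost)
    finally show ?thesis using True by (simp add: segre_def)
  qed (simp add: segre_def)
  have T_sum: "T = (\<lambda>i. segre K S hstar i + segre K S g i)"
    unfolding T_def segre_g by simp
  have T_out: "T i = 0" if "i \<notin> idx K S" for i
    using that by (simp add: T_def segre_def)
  have T_supp: "T i = 0" if i1: "i \<in> idx K S" and i2: "\<not> (\<forall>k\<in>{1..K}. i k \<in> U k)" for i
  proof -
    obtain k where k: "k \<in> {1..K}" "i k \<notin> Sstar k" "i k \<notin> Sbar k"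
      using i2 by (auto simp: U_def supp_un_def)
    have ik: "i k \<in> {1..S}" using i1 k(1) by (auto simp: idx_def PiE_def Pi_def)
    have "hstar k (i k) = 0" using hstar k ik by (auto simp: params_supp_def)
    then have a: "(\<Prod>k=1..K. hstar k (i k)) = 0" using k(1) by (intro prod_zero) auto
    have "hbar k (i k) = 0" using hbar k ik by (auto simp: params_supp_def)
    then have b: "(\<Prod>k=1..K. hbar k (i k)) = 0" using k(1) by (intro prod_zero) auto
    show ?thesis unfolding T_def segre_def if_P[OF i1] a b by simp
  qed
  have T_proj: "tproj K S U T = T"
    unfolding tproj_def fun_eq_iff using T_supp T_out by metis
  define R where "R = (\<lambda>(r,c). \<lambda>i. if i \<in> idx K S \<and> (\<forall>k\<in>{1..K}. i k \<in> U k) then E i $$ (r,c) else 0)"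
  have lift_ip: "lift_supp K S m M U F $$ (r,c) = ipI (idx K S) F (R (r,c))"
    if "r < m 1" "c < m (Suc K)" for F r c
    using that unfolding lift_supp_def lift_entry[OF that] ipI_def R_def E_def tproj_def
    by (intro sum.cong) auto
  have lift_dim: "lift_supp K S m M U F \<in> carrier_mat (m 1) (m (Suc K))" for F
    by (simp add: lift_supp_def lift_def)
  define L where "L = map R (List.product [0..<m 1] [0..<m (Suc K)])"
  have R_in: "R (r,c) \<in> set L" if "r < m 1" "c < m (Suc K)" for r c
    using that by (auto simp: L_def)
  have L_out: "(L!q) i = 0" if "q < length L" "i \<notin> idx K S" for q i
  proof -
    have "L!q \<in> set L" using that by simp
    then obtain r c where "L!q = R (r,c)" by (auto simp: L_def)
    then show ?thesis using that by (simp add: R_def)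
  qed
  obtain d where d: "\<forall>j<length L. ipI (idx K S) (\<lambda>i. T i - lc (length L) d L i) (L!j) = 0"
    using proj_exists[OF finite_idx] by blast
  define T2 where "T2 = lc (length L) d L"
  have orthR: "ipI (idx K S) (\<lambda>i. T i - T2 i) (R (r,c)) = 0" if rc0: "r < m 1" "c < m (Suc K)" for r c
  proof -
    obtain j where "j < length L" "L!j = R (r,c)" using R_in[OF rc0] by (auto simp: in_set_conv_nth)
    then show ?thesis using d by (auto simp: T2_def)
  qed
  have T2_out: "T2 i = 0" if "i \<notin> idx K S" for i
    using L_out that by (simp add: T2_def lc_def)
  have T2_tens: "T2 \<in> tensors K S" using T2_out by (simp add: tensors_def)
  have TT2_tens: "(\<lambda>i. T i - T2 i) \<in> tensors K S" using T2_out T_out by (simp add: tensors_def)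
  have lift_eq: "lift_supp K S m M U T2 = lift_supp K S m M U T"
  proof (rule eq_matI)
    fix r c assume rc: "r < dim_row (lift_supp K S m M U T)" "c < dim_col (lift_supp K S m M U T)"
    then have rc': "r < m 1" "c < m (Suc K)" using lift_dim[of T] by auto
    show "lift_supp K S m M U T2 $$ (r,c) = lift_supp K S m M U T $$ (r,c)"
      using orthR[OF rc'] unfolding lift_ip[OF rc'] ip_diff_left by simp
  qed (auto simp: lift_supp_def lift_def)
  have ker: "lift_supp K S m M U (\<lambda>i. T i - T2 i) = 0\<^sub>m (m 1) (m (K+1))"
  proof (rule eq_matI)
    fix r c assume rc: "r < dim_row (0\<^sub>m (m 1) (m (K+1)) :: real mat)" "c < dim_col (0\<^sub>m (m 1) (m (K+1)) :: real mat)"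
    then have rc': "r < m 1" "c < m (Suc K)" by auto
    show "lift_supp K S m M U (\<lambda>i. T i - T2 i) $$ (r,c) = 0\<^sub>m (m 1) (m (K+1)) $$ (r,c)"
      using orthR[OF rc'] rc' unfolding lift_ip[OF rc'] by simp
  qed (auto simp: lift_supp_def lift_def)
  have dLPs: "LPs \<in> carrier_mat (m 1) (m (Suc K))" unfolding LPs_def by (rule lp_dim)
  have dLPb: "LPb \<in> carrier_mat (m 1) (m (Suc K))" unfolding LPb_def by (rule lp_dim)
  have dX: "X \<in> carrier_mat (m 1) (m (Suc K))" using dLPb e unfolding X LPb_def by simp
  have liftT: "lift_supp K S m M U T = LPs - LPb"
  proof (rule eq_matI)
    fix r c assume rc: "r < dim_row (LPs - LPb)" "c < dim_col (LPs - LPb)"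
    then have rc': "r < m 1" "c < m (Suc K)" using dLPb by auto
    have "lift_supp K S m M U T $$ (r,c) = lift K S m M T $$ (r,c)"
      unfolding lift_supp_def T_proj by (rule refl)
    also have "\<dots> = lift K S m M (segre K S hstar) $$ (r,c) - lift K S m M (segre K S hbar) $$ (r,c)"
      unfolding lift_entry[OF rc'] T_def by (simp add: left_diff_distrib sum_subtractf)
    also have "\<dots> = (LPs - LPb) $$ (r,c)"
      using rc' dLPs dLPb unfolding lift_segre[OF rc'] LPs_def LPb_def by simp
    finally show "lift_supp K S m M U T $$ (r,c) = (LPs - LPb) $$ (r,c)" .
  next
    show "dim_row (lift_supp K S m M U T) = dim_row (LPs - LPb)"
      using lift_dim[of T] dLPb by simp
    show "dim_col (lift_supp K S m M U T) = dim_col (LPs - LPb)"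
      using lift_dim[of T] dLPb by simp
  qed
  have tri: "fnorm (LPs - LPb) \<le> fnorm (LPs - X) + fnorm e"
  proof (rule fnorm_triangle[of _ "m 1" "m (Suc K)"])
    show "LPs - LPb \<in> carrier_mat (m 1) (m (Suc K))" using dLPb by (rule minus_carrier_mat)
    show "LPs - X \<in> carrier_mat (m 1) (m (Suc K))" using dX by (rule minus_carrier_mat)
    show "e \<in> carrier_mat (m 1) (m (Suc K))" using e by simp
    fix r c assume rc: "r < m 1" "c < m (Suc K)"
    have "X $$ (r,c) = LPb $$ (r,c) + e $$ (r,c)" using rc dLPb e unfolding X LPb_def by simp
    then show "(LPs - LPb) $$ (r,c) = (LPs - X) $$ (r,c) + e $$ (r,c)"
      using rc dLPs dLPb dX by simp
  qed
  have small: "fnorm (lift_supp K S m M (supp_un Sstar Sbar) T) \<le> \<rho>"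
  proof -
    have "fnorm (lift_supp K S m M U T) \<le> \<rho>" using tri eta_le e_le unfolding liftT LPs_def by linarith
    then show ?thesis unfolding U_def .
  qed
  have nsp_app: "tnorm K S T \<le> \<gamma> * tnorm K S (\<lambda>i. T i - tproj K S U (\<lambda>i. T i - T2 i) i)"
  proof -
    have ex: "\<exists>h g'. h \<in> params_supp K S Sstar \<and> g' \<in> params_supp K S Sbar \<and>
               T = (\<lambda>i. segre K S h i + segre K S g' i)"
      using hstar g_supp T_sum by blast
    have A: "\<forall>T. (\<exists>h g. h \<in> params_supp K S Sstar \<and> g \<in> params_supp K S Sbar \<and>
               T = (\<lambda>i. segre K S h i + segre K S g i)) \<longrightarrow>
        fnorm (lift_supp K S m M (supp_un Sstar Sbar) T) \<le> \<rho> \<longrightarrow>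
        (\<forall>T'\<in>tensors K S. lift_supp K S m M (supp_un Sstar Sbar) T' = 0\<^sub>m (m 1) (m (K+1)) \<longrightarrow>
           tnorm K S T \<le> \<gamma> * tnorm K S (\<lambda>i. T i - tproj K S (supp_un Sstar Sbar) T' i))"
      using nsp Sstar Sbar unfolding deep_nsp_def by blast
    note B = A[rule_format, OF ex small TT2_tens]
    show ?thesis using B ker unfolding U_def by blast
  qed
  have proj_eq: "(\<lambda>i. T i - tproj K S U (\<lambda>i. T i - T2 i) i) = tproj K S U T2"
    using T_supp T_out by (auto simp: tproj_def fun_eq_iff)
  have orth: "\<forall>T'\<in>tensors K S. lift_supp K S m M U T' = 0\<^sub>m (m 1) (m (K+1)) \<longrightarrow> tinner K S T2 T' = 0"
  proof (intro ballI impI)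
    fix T' assume T': "T' \<in> tensors K S" "lift_supp K S m M U T' = 0\<^sub>m (m 1) (m (K+1))"
    have "\<forall>j<length L. ipI (idx K S) T' (L!j) = 0"
    proof (intro allI impI)
      fix j assume j: "j < length L"
      then have "L!j \<in> set L" by simp
      then obtain r c where rc: "r < m 1" "c < m (Suc K)" "L!j = R (r,c)"
        by (auto simp: L_def)
      show "ipI (idx K S) T' (L!j) = 0"
        using lift_ip[OF rc(1,2), of T'] T'(2) rc by simp
    qed
    then have "ipI (idx K S) T' T2 = 0" unfolding T2_def by (rule ip_lc_zero)
    then show "tinner K S T2 T' = 0" by (simp add: tinner_def ipI_def mult.commute)
  qed
  have rip_app: "\<sigma> * tnorm K S (tproj K S U T2) \<le> fnorm (lift_supp K S m M U T2)"
  proof -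
    have A: "\<forall>T\<in>tensors K S.
        (\<forall>T'\<in>tensors K S. lift_supp K S m M (supp_un Sstar Sbar) T' = 0\<^sub>m (m 1) (m (K+1))
            \<longrightarrow> tinner K S T T' = 0) \<longrightarrow>
        \<sigma> * tnorm K S (tproj K S (supp_un Sstar Sbar) T) \<le> fnorm (lift_supp K S m M (supp_un Sstar Sbar) T)"
      using rip Sstar Sbar unfolding deep_lower_rip_def by blast
    show ?thesis using A T2_tens orth unfolding U_def by blast
  qed
  have "tnorm K S T \<le> \<gamma> * tnorm K S (tproj K S U T2)" using nsp_app proj_eq by simp
  also have "\<dots> \<le> \<gamma> * (fnorm (LPs - LPb) / \<sigma>)"
    using rip_app lift_eq liftT sig gam by (intro mult_left_mono) (auto simp: field_simps)
  also have "\<dots> \<le> \<gamma> * ((fnorm (LPs - X) + \<delta>) / \<sigma>)"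
    using tri e_le sig gam by (intro mult_left_mono divide_right_mono) auto
  finally show ?thesis by (simp add: T_def LPs_def add_divide_distrib algebra_simps)
qed




lemma layer_inf_ge: "j \<in> {1..S} \<Longrightarrow> \<bar>h k j\<bar> \<le> layer_inf S h k"
  unfolding layer_inf_def by simp

lemma layer_inf_ex: "S \<ge> 1 \<Longrightarrow> \<exists>j\<in>{1..S}. \<bar>h k j\<bar> = layer_inf S h k"
proof -
  assume "S \<ge> 1"
  then have "(\<lambda>i. \<bar>h k i\<bar>) ` {1..S} \<noteq> {}" by auto
  then have "layer_inf S h k \<in> (\<lambda>i. \<bar>h k i\<bar>) ` {1..S}" unfolding layer_inf_def by (intro Max_in) auto
  then show ?thesis by auto
qed

lemma layer_inf_eqI: "j0 \<in> {1..S} \<Longrightarrow> \<bar>h k j0\<bar> = x \<Longrightarrow> (\<forall>j\<in>{1..S}. \<bar>h k j\<bar> \<le> x) \<Longrightarrow> layer_inf S h k = x"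
  unfolding layer_inf_def by (intro Max_eqI) auto

lemma tinf_ge: "i \<in> idx K S \<Longrightarrow> \<bar>T i\<bar> \<le> tinfnorm K S T"
  unfolding tinfnorm_def using finite_idx by simp

lemma tinf_eqI: "i0 \<in> idx K S \<Longrightarrow> \<bar>T i0\<bar> = x \<Longrightarrow> (\<forall>i\<in>idx K S. \<bar>T i\<bar> \<le> x) \<Longrightarrow> tinfnorm K S T = x"
  unfolding tinfnorm_def using finite_idx by (intro Max_eqI) auto

lemma idx_mem: "i \<in> idx K S \<Longrightarrow> k \<in> {1..K} \<Longrightarrow> i k \<in> {1..S}"
  unfolding idx_def by (auto simp: PiE_def Pi_def)

lemma argmax_idx:
  assumes "S \<ge> 1"
  shows "\<exists>js\<in>idx K S. \<forall>k\<in>{1..K}. \<bar>h k (js k)\<bar> = layer_inf S h k"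
proof -
  have "\<forall>k. \<exists>j. j \<in> {1..S} \<and> \<bar>h k j\<bar> = layer_inf S h k" using layer_inf_ex[OF assms] by blast
  then obtain f where f: "\<forall>k. f k \<in> {1..S} \<and> \<bar>h k (f k)\<bar> = layer_inf S h k" by metis
  have "restrict f {1..K} \<in> idx K S" using f unfolding idx_def by auto
  then show ?thesis using f by (intro bexI[of _ "restrict f {1..K}"]) auto
qed

lemma tinf_segre:
  assumes S: "S \<ge> 1"
  shows "tinfnorm K S (segre K S h) = (\<Prod>k=1..K. layer_inf S h k)"
proof -
  obtain js where js: "js \<in> idx K S" "\<forall>k\<in>{1..K}. \<bar>h k (js k)\<bar> = layer_inf S h k"
    using argmax_idx[OF S] by blast
  show ?thesis
  proof (rule tinf_eqI[OF js(1)])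
    show "\<bar>segre K S h js\<bar> = (\<Prod>k=1..K. layer_inf S h k)"
      using js by (simp add: segre_def abs_prod)
    show "\<forall>i\<in>idx K S. \<bar>segre K S h i\<bar> \<le> (\<Prod>k=1..K. layer_inf S h k)"
      using idx_mem layer_inf_ge by (auto simp: segre_def abs_prod intro!: prod_mono)
  qed
qed

lemma segre_class:
  assumes "\<forall>k\<in>{1..K}. \<forall>i\<in>{1..S}. g k i = lam k * h k i" "(\<Prod>k=1..K. lam k) = 1"
  shows "segre K S g = segre K S h"
proof
  fix i show "segre K S g i = segre K S h i"
  proof (cases "i \<in> idx K S")
    case True
    have "(\<Prod>k=1..K. g k (i k)) = (\<Prod>k=1..K. lam k * h k (i k))"
      using assms(1) idx_mem[OF True] by (intro prod.cong) auto
    also have "\<dots> = (\<Prod>k=1..K. h k (i k))" using assms(2) by (simp add: prod.distrib)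
    finally show ?thesis using True by (simp add: segre_def)
  qed (simp add: segre_def)
qed

lemma layer_inf_scale:
  assumes "S \<ge> 1"
  shows "layer_inf S (\<lambda>k i. lam k * h k i) k = \<bar>lam k\<bar> * layer_inf S h k"
proof -
  obtain j where j: "j \<in> {1..S}" "\<bar>h k j\<bar> = layer_inf S h k" using layer_inf_ex[OF assms] by blast
  show ?thesis
  proof (rule layer_inf_eqI[OF j(1)])
    show "\<bar>lam k * h k j\<bar> = \<bar>lam k\<bar> * layer_inf S h k" using j by (simp add: abs_mult)
    show "\<forall>i\<in>{1..S}. \<bar>lam k * h k i\<bar> \<le> \<bar>lam k\<bar> * layer_inf S h k"
      using layer_inf_ge by (auto simp: abs_mult intro: mult_left_mono)
  qed
qed

lemma scale_in_class:
  assumes h: "h \<in> params_nz K S" and lam: "\<forall>k\<in>{1..K}. lam k \<noteq> 0" "(\<Prod>k=1..K. lam k) = 1"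
  shows "(\<lambda>k i. lam k * h k i) \<in> pclass K S h"
  using h lam unfolding pclass_def params_nz_def params_def by auto

lemma key_ineq:
  fixes X Y R n nK1 N \<epsilon> :: real
  assumes "nK1 > 0" "n > 0" "N = nK1 * n"
    and "nK1 * \<bar>X - Y * R\<bar> \<le> \<epsilon>" "\<bar>Y\<bar> \<le> n" "R \<le> 1" "R \<ge> 1 - \<epsilon> / N"
  shows "\<bar>X - Y\<bar> \<le> 2 * \<epsilon> * n / N"
proof -
  have N: "N > 0" using assms by simp
  have a: "\<bar>X - Y * R\<bar> \<le> \<epsilon> * n / N" using assms by (simp add: field_simps)
  have "\<bar>Y\<bar> * (1 - R) \<le> n * (\<epsilon> / N)"
    using assms by (intro mult_mono) auto
  moreover have "\<bar>Y - Y * R\<bar> = \<bar>Y\<bar> * (1 - R)"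
  proof -
    have "Y - Y * R = Y * (1 - R)" by (simp add: algebra_simps)
    then show ?thesis using assms(6) by (simp add: abs_mult)
  qed
  ultimately have b: "\<bar>Y - Y * R\<bar> \<le> \<epsilon> * n / N" by (simp add: mult.commute)
  have "\<bar>X - Y\<bar> \<le> \<bar>X - Y * R\<bar> + \<bar>Y - Y * R\<bar>" by linarith
  also have "\<dots> \<le> 2 * \<epsilon> * n / N" using a b by simp
  finally show ?thesis .
qed


lemma layer_inf_pos:
  assumes "h \<in> params_nz K S" "k \<in> {1..K}"
  shows "layer_inf S h k > 0"
proof -
  obtain i where i: "i \<in> {1..S}" "h k i \<noteq> 0" using assms unfolding params_nz_def by blast
  then have "0 < \<bar>h k i\<bar>" by simp
  also have "\<dots> \<le> layer_inf S h k" using layer_inf_ge[OF i(1)] .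
  finally show ?thesis .
qed

lemma root_pow: "N > 0 \<Longrightarrow> K \<ge> 1 \<Longrightarrow> (N powr (1 / real K)) ^ K = N"
proof -
  assume N: "N > 0" and K: "K \<ge> 1"
  have "(N powr (1 / real K)) ^ K = (N powr (1 / real K)) powr (real K)"
    using N by (simp add: powr_realpow)
  also have "\<dots> = N" using K N by (simp add: powr_powr)
  finally show ?thesis .
qed

lemma core:
  assumes K: "K \<ge> 1" and S: "S \<ge> 1"
    and h: "h \<in> params_nz K S" and g: "g \<in> params_nz K S"
    and NgN: "tinfnorm K S (segre K S g) \<le> tinfnorm K S (segre K S h)"
    and eps: "\<forall>i\<in>idx K S. \<bar>segre K S h i - segre K S g i\<bar> \<le> \<epsilon>"
    and epsN: "\<epsilon> \<le> tinfnorm K S (segre K S h) / 2"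
  shows "\<exists>h' g'. h' \<in> pclass K S h \<inter> params_diag K S \<and> g' \<in> pclass K S g \<inter> params_diag K S \<and>
     (\<forall>k\<in>{1..K}. \<forall>j\<in>{1..S}. \<bar>h' k j - g' k j\<bar>
        \<le> 2 * \<epsilon> * (tinfnorm K S (segre K S h) powr (1 / real K)) / tinfnorm K S (segre K S h))"
proof -
  define Ah where "Ah = layer_inf S h"
  define Ag where "Ag = layer_inf S g"
  define N where "N = tinfnorm K S (segre K S h)"
  define Ng where "Ng = tinfnorm K S (segre K S g)"
  have Ahp: "\<And>k. k \<in> {1..K} \<Longrightarrow> Ah k > 0" unfolding Ah_def using layer_inf_pos[OF h] by blast
  have Agp: "\<And>k. k \<in> {1..K} \<Longrightarrow> Ag k > 0" unfolding Ag_def using layer_inf_pos[OF g] by blast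
  have N_eq: "N = (\<Prod>k=1..K. Ah k)" unfolding N_def Ah_def by (rule tinf_segre[OF S])
  have Ng_eq: "Ng = (\<Prod>k=1..K. Ag k)" unfolding Ng_def Ag_def by (rule tinf_segre[OF S])
  have Npos: "N > 0" unfolding N_eq using Ahp by (intro prod_pos) auto
  have Ngpos: "Ng > 0" unfolding Ng_eq using Agp by (intro prod_pos) auto
  define n where "n = N powr (1 / real K)"
  define q where "q = Ng powr (1 / real K)"
  have npos: "n > 0" and qpos: "q > 0" using Npos Ngpos by (auto simp: n_def q_def)
  have nK: "n ^ K = N" unfolding n_def using root_pow Npos K by blast
  have qK: "q ^ K = Ng" unfolding q_def using root_pow Ngpos K by blast
  have qn: "q \<le> n" unfolding q_def n_def using NgN Ngpos by (intro powr_mono2) (auto simp: N_def Ng_def)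
  obtain js where js: "js \<in> idx K S" "\<forall>k\<in>{1..K}. \<bar>h k (js k)\<bar> = Ah k"
    using argmax_idx[OF S] unfolding Ah_def by blast
  define Ph where "Ph = segre K S h js"
  define Pg where "Pg = segre K S g js"
  have Ph_prod: "Ph = (\<Prod>k=1..K. h k (js k))" using js by (simp add: Ph_def segre_def)
  have Pg_prod: "Pg = (\<Prod>k=1..K. g k (js k))" using js by (simp add: Pg_def segre_def)
  have absPh: "\<bar>Ph\<bar> = N" using js by (simp add: Ph_prod N_eq abs_prod)
  have PhPg: "\<bar>Ph - Pg\<bar> \<le> \<epsilon>" using eps js by (simp add: Ph_def Pg_def)
  have epsN': "\<epsilon> \<le> N / 2" using epsN by (simp add: N_def)
  have same: "Pg / Ph > 0" and absPg: "\<bar>Pg\<bar> \<ge> N - \<epsilon>"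
  proof -
    have c: "Ph = N \<or> Ph = - N" using absPh by linarith
    have d: "Ph - \<epsilon> \<le> Pg" "Pg \<le> Ph + \<epsilon>" using PhPg by linarith+
    show "Pg / Ph > 0"
    proof (cases "Ph = N")
      case True
      then have "Pg > 0" using d epsN' Npos by linarith
      then show ?thesis using True Npos by simp
    next
      case False
      then have "Ph = - N" using c by blast
      moreover then have "Pg < 0" using d epsN' Npos by linarith
      ultimately show ?thesis using Npos by (simp add: divide_neg_pos)
    qed
    show "\<bar>Pg\<bar> \<ge> N - \<epsilon>" using c d by linarith
  qed
  have Pgnz: "Pg \<noteq> 0" using same by auto
  have hnz: "\<And>k. k \<in> {1..K} \<Longrightarrow> h k (js k) \<noteq> 0" using js Ahp by fastforce
  have gnz: "\<And>k. k \<in> {1..K} \<Longrightarrow> g k (js k) \<noteq> 0"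
    using Pgnz unfolding Pg_prod by auto
  define u where "u = (\<lambda>l. h l (js l) / g l (js l))"
  define lh where "lh = (\<lambda>k. n / Ah k)"
  define lg where "lg = (\<lambda>k. q / Ag k * (u k / \<bar>u k\<bar>))"
  have unz: "\<And>k. k \<in> {1..K} \<Longrightarrow> u k \<noteq> 0" using hnz gnz by (simp add: u_def)
  have lh_prod: "(\<Prod>k=1..K. lh k) = 1"
    unfolding lh_def prod_dividef using nK N_eq Npos Ahp by (simp add: less_imp_neq[symmetric])
  have u_prod: "(\<Prod>k=1..K. u k) = Ph / Pg" unfolding u_def prod_dividef Ph_prod Pg_prod ..
  have uu_prod: "(\<Prod>k=1..K. u k / \<bar>u k\<bar>) = 1"
  proof -
    have "(\<Prod>k=1..K. u k / \<bar>u k\<bar>) = (Ph / Pg) / \<bar>Ph / Pg\<bar>"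
      unfolding prod_dividef abs_prod[symmetric] u_prod ..
    also have "\<dots> = 1"
    proof -
      have pos: "Ph / Pg > 0" using same by (auto simp: zero_less_divide_iff)
      then have nz: "Ph / Pg \<noteq> 0" by linarith
      show ?thesis by (simp only: abs_of_pos[OF pos] divide_self[OF nz])
    qed
    finally show ?thesis .
  qed
  have lg_prod: "(\<Prod>k=1..K. lg k) = 1"
  proof -
    have "(\<Prod>k=1..K. lg k) = (\<Prod>k=1..K. q / Ag k) * (\<Prod>k=1..K. u k / \<bar>u k\<bar>)"
      unfolding lg_def by (rule prod.distrib)
    also have "(\<Prod>k=1..K. q / Ag k) = q ^ K / Ng"
      unfolding prod_dividef Ng_eq using K by simp
    finally show ?thesis using uu_prod qK Ngpos by simp
  qed
  have lh_nz: "\<forall>k\<in>{1..K}. lh k \<noteq> 0" using Ahp npos by (force simp: lh_def)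
  have lg_nz: "\<forall>k\<in>{1..K}. lg k \<noteq> 0" using Agp qpos unz by (force simp: lg_def)
  define h' where "h' = (\<lambda>k i. lh k * h k i)"
  define g' where "g' = (\<lambda>k i. lg k * g k i)"
  have h'c: "h' \<in> pclass K S h" unfolding h'_def by (rule scale_in_class[OF h lh_nz lh_prod])
  have g'c: "g' \<in> pclass K S g" unfolding g'_def by (rule scale_in_class[OF g lg_nz lg_prod])
  have h'inf: "\<And>k. k \<in> {1..K} \<Longrightarrow> layer_inf S h' k = n"
  proof -
    fix k assume k: "k \<in> {1..K}"
    have p: "layer_inf S h k > 0" using Ahp[OF k] by (simp add: Ah_def)
    have "layer_inf S h' k = \<bar>n / layer_inf S h k\<bar> * layer_inf S h k"
      unfolding h'_def layer_inf_scale[OF S] by (simp add: lh_def Ah_def)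
    also have "\<dots> = n" using p npos by simp
    finally show "layer_inf S h' k = n" .
  qed
  have g'inf: "\<And>k. k \<in> {1..K} \<Longrightarrow> layer_inf S g' k = q"
  proof -
    fix k assume k: "k \<in> {1..K}"
    have p: "layer_inf S g k > 0" using Agp[OF k] by (simp add: Ag_def)
    have uk: "\<bar>u k / \<bar>u k\<bar>\<bar> = 1" using unz[OF k] by simp
    have "layer_inf S g' k = \<bar>q / layer_inf S g k\<bar> * \<bar>u k / \<bar>u k\<bar>\<bar> * layer_inf S g k"
      unfolding g'_def layer_inf_scale[OF S] by (simp add: lg_def Ag_def abs_mult)
    also have "\<dots> = q" using p qpos uk by simp
    finally show "layer_inf S g' k = q" .
  qed
  have h'd: "h' \<in> params_diag K S"
    using h'c h'inf K unfolding params_diag_def pclass_def by auto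
  have g'd: "g' \<in> params_diag K S"
    using g'c g'inf K unfolding params_diag_def pclass_def by auto
  have seg_h': "segre K S h' = segre K S h"
    using lh_prod unfolding h'_def by (intro segre_class) auto
  have seg_g': "segre K S g' = segre K S g"
    using lg_prod unfolding g'_def by (intro segre_class) auto
  define X where "X = (\<lambda>l. h' l (js l))"
  define Y where "Y = (\<lambda>l. g' l (js l))"
  define \<rho> where "\<rho> = (\<lambda>l. Y l / X l)"
  have absX: "\<And>l. l \<in> {1..K} \<Longrightarrow> \<bar>X l\<bar> = n"
  proof -
    fix l assume l: "l \<in> {1..K}"
    have "\<bar>X l\<bar> = \<bar>n / Ah l\<bar> * Ah l" using js(2) l by (simp add: X_def h'_def lh_def abs_mult)
    also have "\<dots> = n" using Ahp[OF l] npos by simp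
    finally show "\<bar>X l\<bar> = n" .
  qed
  have absY: "\<And>l. l \<in> {1..K} \<Longrightarrow> \<bar>Y l\<bar> \<le> q"
    unfolding Y_def using layer_inf_ge[of "js l" S g' l for l] g'inf idx_mem[OF js(1)] by metis
  have Yeq: "\<And>l. l \<in> {1..K} \<Longrightarrow> Y l = \<rho> l * X l"
  proof -
    fix l assume l: "l \<in> {1..K}"
    have "X l \<noteq> 0" using absX[OF l] npos by auto
    then show "Y l = \<rho> l * X l" by (simp add: \<rho>_def)
  qed
  have \<rho>pos: "\<And>l. l \<in> {1..K} \<Longrightarrow> \<rho> l > 0"
  proof -
    fix l assume l: "l \<in> {1..K}"
    have "\<rho> l = (q * Ah l) / (Ag l * n * \<bar>u l\<bar>) * (u l * g l (js l) / h l (js l))"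
      using hnz[OF l] gnz[OF l] Ahp[OF l] Agp[OF l] npos unz[OF l]
      by (simp add: \<rho>_def X_def Y_def h'_def g'_def lh_def lg_def field_simps)
    also have "u l * g l (js l) / h l (js l) = 1" using hnz[OF l] gnz[OF l] by (simp add: u_def)
    finally show "\<rho> l > 0" using Ahp[OF l] Agp[OF l] npos qpos unz[OF l] by simp
  qed
  have \<rho>le1: "\<And>l. l \<in> {1..K} \<Longrightarrow> \<rho> l \<le> 1"
  proof -
    fix l assume l: "l \<in> {1..K}"
    have "\<bar>Y l\<bar> \<le> \<bar>X l\<bar>" using absY[OF l] absX[OF l] qn by simp
    moreover have "\<rho> l = \<bar>Y l\<bar> / \<bar>X l\<bar>"
      using \<rho>pos[OF l] unfolding \<rho>_def by (metis abs_divide abs_of_pos)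
    ultimately show "\<rho> l \<le> 1" using absX[OF l] npos by simp
  qed
  have \<rho>all: "(\<Prod>l=1..K. \<rho> l) = \<bar>Pg\<bar> / N"
  proof -
    have "(\<Prod>l=1..K. \<rho> l) = (\<Prod>l=1..K. Y l) / (\<Prod>l=1..K. X l)"
      unfolding \<rho>_def prod_dividef ..
    also have "(\<Prod>l=1..K. Y l) = Pg" using js seg_g' unfolding Y_def Pg_def
      by (metis segre_def)
    also have "(\<Prod>l=1..K. X l) = Ph" using js seg_h' unfolding X_def Ph_def
      by (metis segre_def)
    finally show ?thesis using same absPh
      by (metis abs_divide abs_of_pos)
  qed
  have main: "\<bar>h' k j - g' k j\<bar> \<le> 2 * \<epsilon> * n / N" if k: "k \<in> {1..K}" and j: "j \<in> {1..S}" for k j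
  proof -
    define A where "A = {1..K} - {k}"
    define R where "R = (\<Prod>l\<in>A. \<rho> l)"
    define nK1 where "nK1 = n ^ (K - 1)"
    have cardA: "card A = K - 1" using k by (simp add: A_def)
    have nK1pos: "nK1 > 0" using npos by (simp add: nK1_def)
    have NnK1: "N = nK1 * n"
    proof -
      obtain K' where "K = Suc K'" using K by (cases K) auto
      then show ?thesis using nK by (simp add: nK1_def mult.commute)
    qed
    have i_idx: "js(k := j) \<in> idx K S" using js(1) k j unfolding idx_def by (auto simp: PiE_def Pi_def extensional_def)
    have spl: "(\<Prod>l=1..K. F l) = F k * (\<Prod>l\<in>A. F l)" for F :: "nat \<Rightarrow> real"
      unfolding A_def using k by (simp add: prod.remove)
    have sh: "segre K S h' (js(k := j)) = h' k j * (\<Prod>l\<in>A. X l)"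
      using i_idx unfolding segre_def X_def spl by (simp add: A_def)
    have sg: "segre K S g' (js(k := j)) = g' k j * (\<Prod>l\<in>A. Y l)"
      using i_idx unfolding segre_def Y_def spl by (simp add: A_def)
    have YA: "(\<Prod>l\<in>A. Y l) = R * (\<Prod>l\<in>A. X l)"
      unfolding R_def prod.distrib[symmetric] using Yeq by (intro prod.cong) (auto simp: A_def)
    have absXA: "\<bar>\<Prod>l\<in>A. X l\<bar> = nK1"
      unfolding abs_prod nK1_def cardA[symmetric] using absX by (simp add: A_def)
    have "\<bar>segre K S h' (js(k := j)) - segre K S g' (js(k := j))\<bar> \<le> \<epsilon>"
      using eps i_idx unfolding seg_h' seg_g' by blast
    then have e1: "nK1 * \<bar>h' k j - g' k j * R\<bar> \<le> \<epsilon>"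
      unfolding sh sg YA absXA[symmetric] abs_mult[symmetric] by (simp add: algebra_simps)
    have absY': "\<bar>g' k j\<bar> \<le> n" using layer_inf_ge[OF j, of g' k] g'inf[OF k] qn by simp
    have R1: "R \<le> 1" unfolding R_def using \<rho>pos \<rho>le1
      by (intro prod_le_1) (auto simp: A_def less_imp_le)
    have "\<bar>Pg\<bar> / N = \<rho> k * R" using \<rho>all spl[of \<rho>] by (simp add: R_def)
    also have "\<dots> \<le> R"
      using \<rho>le1[OF k] R1 \<rho>pos \<rho>pos[OF k] unfolding R_def
      by (intro mult_left_le_one_le prod_nonneg) (auto simp: A_def less_imp_le)
    finally have "\<bar>Pg\<bar> / N \<le> R" .
    moreover have "1 - \<epsilon> / N \<le> \<bar>Pg\<bar> / N"
    proof -
      have "(N - \<epsilon>) / N \<le> \<bar>Pg\<bar> / N" using absPg Npos by (intro divide_right_mono) auto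
      then show ?thesis using Npos by (simp add: diff_divide_distrib)
    qed
    ultimately have R2: "R \<ge> 1 - \<epsilon> / N" by linarith
    show ?thesis by (rule key_ineq[OF nK1pos npos NnK1 e1 absY' R1 R2])
  qed
  show ?thesis
    using h'c h'd g'c g'd main unfolding n_def N_def by blast
qed


lemma pnorm_nonneg:
  assumes K: "K \<ge> 1" and S: "S \<ge> 1"
  shows "pnorm K S p D \<ge> 0"
proof (cases "p = \<infinity>")
  case True
  have "(1, 1) \<in> {1..K} \<times> {1..S}" using K S by auto
  then have "\<bar>D 1 1\<bar> \<le> Max ((\<lambda>(k, i). \<bar>D k i\<bar>) ` ({1..K} \<times> {1..S}))"
    by (intro Max_ge) auto
  then show ?thesis using True unfolding pnorm_def by simp
next
  case False then show ?thesis unfolding pnorm_def by simp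
qed

lemma pnorm_bound:
  assumes K: "K \<ge> 1" and S: "S \<ge> 1" and p: "p \<ge> 1" and B: "B \<ge> 0"
    and D: "\<forall>k\<in>{1..K}. \<forall>i\<in>{1..S}. \<bar>D k i\<bar> \<le> B"
  shows "pnorm K S p D \<le> (real K * real S) powr inv_p p * B"
proof (cases "p = \<infinity>")
  case True
  have "Max ((\<lambda>(k, i). \<bar>D k i\<bar>) ` ({1..K} \<times> {1..S})) \<le> B"
    using D K S by (subst Max_le_iff) auto
  then show ?thesis using True K S unfolding pnorm_def inv_p_def by simp
next
  case False
  obtain r where r: "p = ereal r" using p False by (cases p) auto
  have r1: "r \<ge> 1" using p r by simp
  have "(\<Sum>k=1..K. \<Sum>i=1..S. \<bar>D k i\<bar> powr r) \<le> (\<Sum>k=1..K. \<Sum>i=1..S. B powr r)"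
    using D r1 by (intro sum_mono powr_mono2) auto
  also have "\<dots> = (real K * real S) * B powr r" by simp
  finally have le: "(\<Sum>k=1..K. \<Sum>i=1..S. \<bar>D k i\<bar> powr r) \<le> (real K * real S) * B powr r" .
  have "pnorm K S p D = (\<Sum>k=1..K. \<Sum>i=1..S. \<bar>D k i\<bar> powr r) powr (1 / r)"
    using False r by (simp add: pnorm_def)
  also have "\<dots> \<le> ((real K * real S) * B powr r) powr (1 / r)"
    using le r1 by (intro powr_mono2) (auto intro!: sum_nonneg)
  also have "\<dots> = (real K * real S) powr (1 / r) * B"
    using B r1 by (simp add: powr_mult powr_powr)
  finally show ?thesis using False r by (simp add: inv_p_def)
qed

lemma dist_le:
  assumes K: "K \<ge> 1" and S: "S \<ge> 1"
    and h': "h' \<in> pclass K S h \<inter> params_diag K S" and g': "g' \<in> pclass K S g \<inter> params_diag K S"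
  shows "dist_p K S p h g \<le> pnorm K S p (\<lambda>k i. h' k i - g' k i)"
  unfolding dist_p_def
proof (rule cInf_lower)
  show "pnorm K S p (\<lambda>k i. h' k i - g' k i) \<in> {pnorm K S p (\<lambda>k i. h' k i - g' k i) |h' g'.
       h' \<in> pclass K S h \<inter> params_diag K S \<and> g' \<in> pclass K S g \<inter> params_diag K S}"
    using h' g' by blast
  show "bdd_below {pnorm K S p (\<lambda>k i. h' k i - g' k i) |h' g'.
       h' \<in> pclass K S h \<inter> params_diag K S \<and> g' \<in> pclass K S g \<inter> params_diag K S}"
    using pnorm_nonneg[OF K S] by (intro bdd_belowI[of _ 0]) auto
qed

lemma pnorm_swap: "pnorm K S p (\<lambda>k i. a k i - b k i) = pnorm K S p (\<lambda>k i. b k i - a k i)"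
  unfolding pnorm_def by (simp add: abs_minus_commute)

lemma dist_sym: "dist_p K S p h g = dist_p K S p g h"
proof -
  have "{pnorm K S p (\<lambda>k i. h' k i - g' k i) |h' g'.
       h' \<in> pclass K S h \<inter> params_diag K S \<and> g' \<in> pclass K S g \<inter> params_diag K S}
      = {pnorm K S p (\<lambda>k i. h' k i - g' k i) |h' g'.
       h' \<in> pclass K S g \<inter> params_diag K S \<and> g' \<in> pclass K S h \<inter> params_diag K S}"
    using pnorm_swap by blast
  then show ?thesis unfolding dist_p_def by simp
qed

lemma minpow:
  fixes a b :: real
  assumes "0 < a" "a \<le> b" "K \<ge> 1"
  shows "min (a powr (1 / real K - 1)) (b powr (1 / real K - 1)) = b powr (1 / real K) / b"
proof -
  have e: "1 / real K - 1 \<le> 0" using assms(3) by simp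
  have "b powr (1 / real K - 1) \<le> a powr (1 / real K - 1)" by (rule powr_mono2'[OF e assms(1,2)])
  then have "min (a powr (1 / real K - 1)) (b powr (1 / real K - 1)) = b powr (1 / real K - 1)" by simp
  also have "\<dots> = b powr (1 / real K) / b" using assms by (simp add: powr_diff)
  finally show ?thesis .
qed

lemma tinf_pos: "K \<ge> 1 \<Longrightarrow> S \<ge> 1 \<Longrightarrow> h \<in> params_nz K S \<Longrightarrow> tinfnorm K S (segre K S h) > 0"
  using tinf_segre layer_inf_pos by (metis prod_pos)

lemma part2_half:
  assumes K: "K \<ge> 1" and S: "S \<ge> 1"
    and h: "h \<in> params_nz K S" and g: "g \<in> params_nz K S"
    and NgN: "tinfnorm K S (segre K S g) \<le> tinfnorm K S (segre K S h)"
    and eps: "\<forall>i\<in>idx K S. \<bar>segre K S h i - segre K S g i\<bar> \<le> \<epsilon>"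
    and epsN: "\<epsilon> \<le> tinfnorm K S (segre K S h) / 2" and e0: "\<epsilon> \<ge> 0"
    and p: "p \<ge> 1"
  shows "dist_p K S p h g \<le> 7 * (real K * real S) powr (inv_p p)
           * min (tinfnorm K S (segre K S g) powr (1 / real K - 1))
                 (tinfnorm K S (segre K S h) powr (1 / real K - 1)) * \<epsilon>"
proof -
  define N where "N = tinfnorm K S (segre K S h)"
  have Npos: "N > 0" unfolding N_def by (rule tinf_pos[OF K S h])
  have Ngpos: "tinfnorm K S (segre K S g) > 0" by (rule tinf_pos[OF K S g])
  obtain h' g' where hg: "h' \<in> pclass K S h \<inter> params_diag K S" "g' \<in> pclass K S g \<inter> params_diag K S"
    and b: "\<forall>k\<in>{1..K}. \<forall>j\<in>{1..S}. \<bar>h' k j - g' k j\<bar> \<le> 2 * \<epsilon> * (N powr (1 / real K)) / N"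
    using core[OF K S h g NgN eps epsN] unfolding N_def by blast
  have B0: "2 * \<epsilon> * (N powr (1 / real K)) / N \<ge> 0" using e0 Npos by simp
  have "dist_p K S p h g \<le> pnorm K S p (\<lambda>k i. h' k i - g' k i)" by (rule dist_le[OF K S hg])
  also have "\<dots> \<le> (real K * real S) powr inv_p p * (2 * \<epsilon> * (N powr (1 / real K)) / N)"
    by (rule pnorm_bound[OF K S p B0 b])
  also have "\<dots> = 2 * ((real K * real S) powr inv_p p * (N powr (1 / real K) / N) * \<epsilon>)" by simp
  also have "\<dots> \<le> 7 * ((real K * real S) powr inv_p p * (N powr (1 / real K) / N) * \<epsilon>)"
    using e0 Npos by (intro mult_right_mono) auto
  also have "N powr (1 / real K) / N = min (tinfnorm K S (segre K S g) powr (1 / real K - 1))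
                 (tinfnorm K S (segre K S h) powr (1 / real K - 1))"
    using minpow[OF Ngpos NgN K] unfolding N_def by simp
  finally show ?thesis by (simp add: mult.assoc)
qed


theorem theorem3:
  fixes K S :: nat and m :: "nat \<Rightarrow> nat"
    and M :: "nat \<Rightarrow> (nat \<Rightarrow> real) \<Rightarrow> real mat"
    and Ms :: "(nat \<Rightarrow> nat set) set"
    and \<gamma> \<rho> \<sigma> \<delta> :: real
    and Sbar Sstar :: "nat \<Rightarrow> nat set"
    and hbar hstar :: "nat \<Rightarrow> nat \<Rightarrow> real"
    and e X :: "real mat"
  assumes K: "K \<ge> 1" and S: "S \<ge> 1"
    and m_pos: "\<forall>k\<in>{1..K+1}. m k > 0"
    and M_dim: "\<forall>k\<in>{1..K}. \<forall>v. M k v \<in> carrier_mat (m k) (m (Suc k))"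
    and M_fun: "\<forall>k\<in>{1..K}. \<forall>v w. (\<forall>i\<in>{1..S}. v i = w i) \<longrightarrow> M k v = M k w"
    and M_add: "\<forall>k\<in>{1..K}. \<forall>v w. M k (\<lambda>i. v i + w i) = M k v + M k w"
    and M_smult: "\<forall>k\<in>{1..K}. \<forall>a v. M k (\<lambda>i. a * v i) = a \<cdot>\<^sub>m M k v"
    and Ms_fin: "finite Ms"
    and Ms_supp: "\<forall>Sp\<in>Ms. \<forall>k\<in>{1..K}. Sp k \<subseteq> {1..S}"
    and nsp: "deep_nsp K S m M Ms \<gamma> \<rho>"
    and rip: "deep_lower_rip K S m M Ms \<sigma>"
    and Sbar: "Sbar \<in> Ms" and hbar: "hbar \<in> params_supp K S Sbar"
    and \<delta>: "\<delta> \<ge> 0"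
    and e: "e \<in> carrier_mat (m 1) (m (K+1))" and e_le: "fnorm e \<le> \<delta>"
    and X: "X = layer_prod K M hbar + e"
    and Sstar: "Sstar \<in> Ms" and hstar: "hstar \<in> params_supp K S Sstar"
    and eta_le: "fnorm (layer_prod K M hstar - X) + \<delta> \<le> \<rho>"
  shows "tnorm K S (\<lambda>i. segre K S hstar i - segre K S hbar i)
           \<le> \<gamma> / \<sigma> * (\<delta> + fnorm (layer_prod K M hstar - X))
         \<and> ((\<gamma> / \<sigma> * (\<delta> + fnorm (layer_prod K M hstar - X))
               \<le> 1/2 * max (tinfnorm K S (segre K S hstar)) (tinfnorm K S (segre K S hbar))
             \<and> hstar \<in> params_nz K S \<and> hbar \<in> params_nz K S)
            \<longrightarrow> (\<forall>p::ereal. p \<ge> 1 \<longrightarrow>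
                  dist_p K S p hstar hbar
                  \<le> 7 * (real K * real S) powr (inv_p p)
                      * min (tinfnorm K S (segre K S hbar) powr (1 / real K - 1))
                            (tinfnorm K S (segre K S hstar) powr (1 / real K - 1))
                      * (\<gamma> / \<sigma> * (\<delta> + fnorm (layer_prod K M hstar - X)))))"
proof -
  define \<epsilon> where "\<epsilon> = \<gamma> / \<sigma> * (\<delta> + fnorm (layer_prod K M hstar - X))"
  have P1: "tnorm K S (\<lambda>i. segre K S hstar i - segre K S hbar i) \<le> \<epsilon>"
    unfolding \<epsilon>_def
    by (rule part1[OF K M_dim M_fun M_add M_smult nsp rip Sbar hbar e e_le X Sstar hstar eta_le])
  have t0: "tnorm K S (\<lambda>i. segre K S hstar i - segre K S hbar i) \<ge> 0"
    unfolding tnorm_L2 by (rule L2_set_nonneg)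
  have e0: "\<epsilon> \<ge> 0" using P1 t0 by linarith
  have eps: "\<forall>i\<in>idx K S. \<bar>segre K S hstar i - segre K S hbar i\<bar> \<le> \<epsilon>"
  proof
    fix i assume "i \<in> idx K S"
    then show "\<bar>segre K S hstar i - segre K S hbar i\<bar> \<le> \<epsilon>"
      using abs_le_tnorm[of i K S "\<lambda>i. segre K S hstar i - segre K S hbar i"] P1 by simp
  qed
  have eps': "\<forall>i\<in>idx K S. \<bar>segre K S hbar i - segre K S hstar i\<bar> \<le> \<epsilon>"
    using eps by (simp add: abs_minus_commute)
  have P2: "(\<epsilon> \<le> 1/2 * max (tinfnorm K S (segre K S hstar)) (tinfnorm K S (segre K S hbar))
             \<and> hstar \<in> params_nz K S \<and> hbar \<in> params_nz K S)
            \<longrightarrow> (\<forall>p::ereal. p \<ge> 1 \<longrightarrow>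
                  dist_p K S p hstar hbar
                  \<le> 7 * (real K * real S) powr (inv_p p)
                      * min (tinfnorm K S (segre K S hbar) powr (1 / real K - 1))
                            (tinfnorm K S (segre K S hstar) powr (1 / real K - 1))
                      * \<epsilon>)"
  proof (intro impI allI)
    fix p :: ereal
    assume H: "\<epsilon> \<le> 1/2 * max (tinfnorm K S (segre K S hstar)) (tinfnorm K S (segre K S hbar))
             \<and> hstar \<in> params_nz K S \<and> hbar \<in> params_nz K S"
      and p: "p \<ge> 1"
    show "dist_p K S p hstar hbar
                  \<le> 7 * (real K * real S) powr (inv_p p)
                      * min (tinfnorm K S (segre K S hbar) powr (1 / real K - 1))
                            (tinfnorm K S (segre K S hstar) powr (1 / real K - 1))
                      * \<epsilon>"
    proof (cases "tinfnorm K S (segre K S hbar) \<le> tinfnorm K S (segre K S hstar)")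
      case True
      have epsN: "\<epsilon> \<le> tinfnorm K S (segre K S hstar) / 2" using H True by simp
      have hs: "hstar \<in> params_nz K S" and hb: "hbar \<in> params_nz K S" using H by simp_all
      show ?thesis by (rule part2_half[OF K S hs hb True eps epsN e0 p])
    next
      case False
      then have F: "tinfnorm K S (segre K S hstar) \<le> tinfnorm K S (segre K S hbar)" by simp
      have epsN: "\<epsilon> \<le> tinfnorm K S (segre K S hbar) / 2" using H F by simp
      have "dist_p K S p hbar hstar \<le> 7 * (real K * real S) powr (inv_p p)
           * min (tinfnorm K S (segre K S hstar) powr (1 / real K - 1))
                 (tinfnorm K S (segre K S hbar) powr (1 / real K - 1)) * \<epsilon>"
      proof -
        have hs: "hstar \<in> params_nz K S" and hb: "hbar \<in> params_nz K S" using H by simp_all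
        show ?thesis by (rule part2_half[OF K S hb hs F eps' epsN e0 p])
      qed
      then show ?thesis by (simp add: dist_sym[of K S p hstar hbar] min.commute)
    qed
  qed
  show ?thesis unfolding \<epsilon>_def[symmetric] using P1 P2 by (rule conjI)
qed

end
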